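(* Let $r\ge1$. For every $d\in\mathbb{Z}$ the limit $\mu^{(r)}(d):=\lim_{N\to\infty}\frac1N|\{n<N:\Delta^{(r)}(n)=d\}|$ exists and \[\mu^{(r)}(d)=\mathbb{P}(\{x\in\mathbb{X}:\Delta^{(r)}(x)=d\}).\] Moreover $\int_{\mathbb{X}}\Delta^{(r)}\,d\mathbb{P}=\sum_{d\in\mathbb{Z}}d\,\mu^{(r)}(d)=0$, and $\int_{\mathbb{X}}|\Delta^{(r)}|^j\,d\mathbb{P}<\infty$ for every $j\ge1$.
   Context: Fix an integer $b\ge2$. $\mathbb{X}:=\{0,\dots,b-1\}^{\mathbb{N}}$ is the space of $b$-adic integers ($x_0$ the units digit) with addition with carries extending addition on $\mathbb{N}$ ($\mathbb{N}$ embedded via base-$b$ digits); $\mathbb{P}$ is its normalized Haar measure (digits i.i.d. uniform). For $k\in\mathbb{N}$, $s_k(x):=x_0+\dots+x_k$, $\Delta_k^{(r)}(x):=s_k(x+r)-s_k(x)$, and $\Delta^{(r)}(x):=\lim_k\Delta_k^{(r)}(x)$, defined for all but finitely many $x$. For $n\in\mathbb{N}$, $\Delta^{(r)}(n)=s(n+r)-s(n)$, where $s$ is the base-$b$ sum-of-digits function. *)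

theory Defs
  imports "HOL-Probability.Probability"
begin

text \<open>b-adic integers: digit sequences x :: nat \<Rightarrow> nat, x 0 the units digit,
  all digits in {0..<b}.  Haar measure: infinite product of uniform measures on the digits.\<close>

definition haar :: "nat \<Rightarrow> (nat \<Rightarrow> nat) measure" where
  "haar b = (\<Pi>\<^sub>M i\<in>(UNIV::nat set). uniform_count_measure {0..<b})"

definition nat_digits :: "nat \<Rightarrow> nat \<Rightarrow> nat \<Rightarrow> nat" where
  "nat_digits b n i = (n div b ^ i) mod b"

fun carry :: "nat \<Rightarrow> nat \<Rightarrow> (nat \<Rightarrow> nat) \<Rightarrow> nat \<Rightarrow> nat" where
  "carry b r x 0 = 0"
| "carry b r x (Suc i) = (x i + nat_digits b r i + carry b r x i) div b"

definition add_nat :: "nat \<Rightarrow> (nat \<Rightarrow> nat) \<Rightarrow> nat \<Rightarrow> nat \<Rightarrow> nat" where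
  "add_nat b x r i = (x i + nat_digits b r i + carry b r x i) mod b"

definition partial_digit_sum :: "nat \<Rightarrow> (nat \<Rightarrow> nat) \<Rightarrow> nat" where
  "partial_digit_sum k x = (\<Sum>i\<le>k. x i)"

definition Delta_k :: "nat \<Rightarrow> nat \<Rightarrow> nat \<Rightarrow> (nat \<Rightarrow> nat) \<Rightarrow> int" where
  "Delta_k b r k x = int (partial_digit_sum k (add_nat b x r)) - int (partial_digit_sum k x)"

text \<open>The limit of an integer sequence exists iff the sequence is eventually constant;
  where the limit does not exist (finitely many x) we use the default value 0.\<close>
definition Delta :: "nat \<Rightarrow> nat \<Rightarrow> (nat \<Rightarrow> nat) \<Rightarrow> int" where
  "Delta b r x = (if \<exists>d. \<forall>\<^sub>F k in sequentially. Delta_k b r k x = d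
                  then (THE d. \<forall>\<^sub>F k in sequentially. Delta_k b r k x = d) else 0)"

definition mu :: "nat \<Rightarrow> nat \<Rightarrow> int \<Rightarrow> real" where
  "mu b r d = lim (\<lambda>N. real (card {n. n < N \<and> Delta b r (nat_digits b n) = d}) / real N)"

end

theory Submission
  imports Defs
begin



definition phi :: "nat \<Rightarrow> nat \<Rightarrow> (nat \<Rightarrow> nat) \<Rightarrow> nat" where
  "phi b K x = (\<Sum>i<K. x i * b ^ i)"

lemma dig_0: "nat_digits b m 0 = m mod b"
  by (simp add: nat_digits_def)

lemma dig_Suc: "nat_digits b m (Suc i) = nat_digits b (m div b) i"
  by (simp add: nat_digits_def div_mult2_eq)

lemma dig_lt: "0 < b \<Longrightarrow> nat_digits b m i < b"
  by (simp add: nat_digits_def)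

lemma phi_Suc: "phi b (Suc K) x = x 0 + b * phi b K (\<lambda>i. x (Suc i))"
  unfolding phi_def
  by (simp add: sum.lessThan_Suc_shift sum_distrib_left mult.assoc mult.left_commute del: sum.lessThan_Suc)

lemma phi_lt: "(\<And>i. i < K \<Longrightarrow> x i < b) \<Longrightarrow> phi b K x < b ^ K"
proof (induction K arbitrary: x)
  case 0 then show ?case by (simp add: phi_def)
next
  case (Suc K)
  have a: "phi b K (\<lambda>i. x (Suc i)) < b ^ K" using Suc by auto
  have "x 0 < b" using Suc by auto
  then have "x 0 + b * phi b K (\<lambda>i. x (Suc i)) < b + b * phi b K (\<lambda>i. x (Suc i))" by simp
  also have "\<dots> = b * (phi b K (\<lambda>i. x (Suc i)) + 1)" by simp
  also have "\<dots> \<le> b * b ^ K" using a by (intro mult_le_mono2) simp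
  finally show ?case by (simp add: phi_Suc)
qed

lemma dig_phi: "0 < b \<Longrightarrow> (\<And>i. i < K \<Longrightarrow> x i < b) \<Longrightarrow> i < K \<Longrightarrow> nat_digits b (phi b K x) i = x i"
proof (induction K arbitrary: x i)
  case 0 then show ?case by simp
next
  case (Suc K)
  show ?case
  proof (cases i)
    case 0
    then show ?thesis using Suc.prems by (simp add: phi_Suc dig_0)
  next
    case (Suc j)
    have "x 0 < b" using Suc.prems by auto
    then have "(x 0 + b * phi b K (\<lambda>i. x (Suc i))) div b = phi b K (\<lambda>i. x (Suc i))"
      using Suc.prems(1) by simp
    then show ?thesis using Suc.prems Suc Suc.IH[of "\<lambda>i. x (Suc i)" j]
      by (simp add: phi_Suc dig_Suc)
  qed
qed

lemma phi_dig: "phi b K (nat_digits b m) = m mod b ^ K"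
proof (induction K arbitrary: m)
  case 0 then show ?case by (simp add: phi_def)
next
  case (Suc K)
  have "phi b (Suc K) (nat_digits b m) = m mod b + b * ((m div b) mod b ^ K)"
    by (simp add: phi_Suc dig_Suc dig_0 Suc.IH)
  also have "\<dots> = m mod b ^ Suc K"
    by (simp add: mod_mult2_eq)
  finally show ?case .
qed

lemma dig_mod: "0 < b \<Longrightarrow> i < K \<Longrightarrow> nat_digits b (m mod b ^ K) i = nat_digits b m i"
proof -
  assume "i < K" and b: "0 < b"
  then obtain k where k: "K = i + Suc k" by (metis add_Suc_right less_imp_Suc_add add.commute)
  have "m mod b ^ K = m mod (b ^ i * b ^ Suc k)" by (simp add: k power_add ac_simps)
  then have "(m mod b ^ K) div b ^ i = (m div b ^ i) mod b ^ Suc k"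
    using b by (simp add: mod_mult2_eq)
  then show ?thesis unfolding nat_digits_def
    by (simp add: mod_mod_cancel)
qed

lemma carry_local: "(\<And>j. j < i \<Longrightarrow> x j = y j) \<Longrightarrow> carry b r x i = carry b r y i"
  by (induction i) auto

lemma add_local: "(\<And>j. j \<le> i \<Longrightarrow> x j = y j) \<Longrightarrow> add_nat b x r i = add_nat b y r i"
  unfolding add_nat_def using carry_local[of i x y b r] by auto

lemma Delta_k_local: "(\<And>j. j \<le> k \<Longrightarrow> x j = y j) \<Longrightarrow> Delta_k b r k x = Delta_k b r k y"
  unfolding Delta_k_def partial_digit_sum_def
  by (intro arg_cong2[where f="(-)"] arg_cong[where f=int] sum.cong refl) (auto intro: add_local)

lemma carry_nat: "0 < b \<Longrightarrow> carry b r (nat_digits b m) i = (m mod b ^ i + r mod b ^ i) div b ^ i"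
proof (induction i)
  case 0 then show ?case by simp
next
  case (Suc i)
  let ?B = "b ^ i"
  have B: "?B > 0" using Suc by simp
  have m: "m mod (?B * b) = ?B * nat_digits b m i + m mod ?B"
    by (simp add: mod_mult2_eq nat_digits_def)
  have r: "r mod (?B * b) = ?B * nat_digits b r i + r mod ?B"
    by (simp add: mod_mult2_eq nat_digits_def)
  let ?c = "(m mod ?B + r mod ?B) div ?B"
  have e: "m mod ?B + r mod ?B = ?B * ?c + (m mod ?B + r mod ?B) mod ?B" by simp
  have "m mod (?B * b) + r mod (?B * b)
      = ?B * (nat_digits b m i + nat_digits b r i + ?c) + (m mod ?B + r mod ?B) mod ?B"
    by (subst m, subst r, subst (2) e) (simp add: algebra_simps)
  then have "(m mod (?B * b) + r mod (?B * b)) div ?B = nat_digits b m i + nat_digits b r i + ?c"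
    using B by simp
  then have "(m mod (?B * b) + r mod (?B * b)) div (?B * b) = (nat_digits b m i + nat_digits b r i + ?c) div b"
    by (simp add: div_mult2_eq)
  then show ?case using Suc by (simp add: mult.commute)
qed

lemma add_nat_nat: "0 < b \<Longrightarrow> add_nat b (nat_digits b m) r i = nat_digits b (m + r) i"
proof -
  assume b: "0 < b"
  have "(m + r) div b ^ i = m div b ^ i + r div b ^ i + (m mod b ^ i + r mod b ^ i) div b ^ i"
    by (rule div_add1_eq)
  then show ?thesis unfolding add_nat_def carry_nat[OF b]
    by (simp add: nat_digits_def mod_simps add.assoc) (metis add.left_commute mod_add_left_eq)
qed




declare carry.simps(2)[simp del]

lemma space_haar: "space (haar b) = {x. \<forall>i. x i < b}"
  by (auto simp: haar_def space_PiM PiE_def Pi_def extensional_def space_uniform_count_measure)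

lemma the_ev: "eventually (\<lambda>k. f k = (d::int)) sequentially \<Longrightarrow> (THE d. eventually (\<lambda>k. f k = d) sequentially) = d"
proof (rule the_equality)
  fix d' assume "eventually (\<lambda>k. f k = d') sequentially" "eventually (\<lambda>k. f k = d) sequentially"
  then have "eventually (\<lambda>k. d' = d) sequentially" by eventually_elim simp
  then show "d' = d" by simp
qed

lemma Delta_k_Suc: "Delta_k b r (Suc k) x = Delta_k b r k x + int (add_nat b x r (Suc k)) - int (x (Suc k))"
  by (simp add: Delta_k_def partial_digit_sum_def)

locale dsetup =
  fixes b r :: nat
  assumes b2: "2 \<le> b" and r1: "1 \<le> r"
begin

lemma b0: "0 < b" using b2 by simp

lemma r_lt: "r < b ^ r"
proof -
  have "r < 2 ^ r" by (rule less_exp)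
  also have "\<dots> \<le> b ^ r" using b2 by (rule power_mono) simp
  finally show ?thesis .
qed

lemma rdig0: "r \<le> i \<Longrightarrow> nat_digits b r i = 0"
proof -
  assume "r \<le> i"
  then have "b ^ r \<le> b ^ i" using b2 by (intro power_increasing) auto
  then have "r < b ^ i" using r_lt by simp
  then show ?thesis by (simp add: nat_digits_def)
qed

lemma carry_le1: "(\<And>i. x i < b) \<Longrightarrow> carry b r x i \<le> 1"
proof (induction i)
  case 0 then show ?case by simp
next
  case (Suc i)
  have "x i + nat_digits b r i + carry b r x i < 2 * b"
    using Suc.prems[of i] Suc.IH[OF Suc.prems] dig_lt[OF b0, of r i] by linarith
  then have "(x i + nat_digits b r i + carry b r x i) div b < 2" by (simp add: less_mult_imp_div_less)
  then show ?case by (simp add: carry.simps)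
qed

lemma carry_Suc_ne: "(\<And>i. x i < b) \<Longrightarrow> r \<le> K \<Longrightarrow> carry b r x (Suc K) \<noteq> 0 \<Longrightarrow> carry b r x K \<noteq> 0 \<and> x K = b - 1"
proof -
  assume x: "\<And>i. x i < b" and K: "r \<le> K" and c: "carry b r x (Suc K) \<noteq> 0"
  have c1: "carry b r x K \<le> 1" using carry_le1 x by blast
  have "(x K + carry b r x K) div b \<noteq> 0" using c rdig0[OF K] by (simp add: carry.simps)
  then have "x K + carry b r x K \<ge> b" by (metis div_less not_less)
  then show ?thesis using x[of K] c1 by auto
qed

lemma carry_tail: assumes xb: "\<And>i. x i < b" and K: "r \<le> K" and c: "carry b r x K = 0" and j: "K \<le> j" shows "carry b r x j = 0"
  using j
proof (induction j rule: dec_induct)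
  case base then show ?case using c by simp
next
  case (step n)
  have "r \<le> n" using K step(1) by simp
  then show ?case using carry_Suc_ne[of x n] xb step(3) by auto
qed

lemma add_tail: "(\<And>i. x i < b) \<Longrightarrow> r \<le> i \<Longrightarrow> carry b r x i = 0 \<Longrightarrow> add_nat b x r i = x i"
  by (simp add: add_nat_def rdig0)

lemma Delta_eq: assumes x: "\<And>i. x i < b" and K: "r \<le> K" and c: "carry b r x K = 0"
  shows "Delta b r x = Delta_k b r (K - 1) x"
proof -
  have "Delta_k b r k x = Delta_k b r (K - 1) x" if "K - 1 \<le> k" for k
    using that
  proof (induction k rule: dec_induct)
    case base then show ?case by simp
  next
    case (step k)
    have "K \<le> Suc k" using step by simp
    then have "carry b r x (Suc k) = 0" using carry_tail[OF x K c] by simp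
    then have "add_nat b x r (Suc k) = x (Suc k)" using add_tail[OF x] K \<open>K \<le> Suc k\<close> by simp
    then show ?case using step by (simp add: Delta_k_Suc)
  qed
  then have ev: "eventually (\<lambda>k. Delta_k b r k x = Delta_k b r (K - 1) x) sequentially"
    unfolding eventually_sequentially by blast
  then have ex: "\<exists>d. eventually (\<lambda>k. Delta_k b r k x = d) sequentially" by blast
  show ?thesis unfolding Delta_def if_P[OF ex] by (rule the_ev[OF ev])
qed

lemma Delta_C: assumes xb: "\<And>i. x i < b" and C: "\<And>K. r \<le> K \<Longrightarrow> carry b r x K \<noteq> 0"
  shows "Delta b r x = 0"
proof -
  have step: "Delta_k b r (Suc k) x = Delta_k b r k x - (int b - 1)" if "r \<le> k" for k
  proof -
    have "carry b r x (Suc (Suc k)) \<noteq> 0" using C that by simp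
    then have xk: "x (Suc k) = b - 1" "carry b r x (Suc k) \<noteq> 0" using carry_Suc_ne[of x "Suc k"] xb that by auto
    then have "carry b r x (Suc k) = 1" using carry_le1[of x "Suc k"] xb by simp
    then have "add_nat b x r (Suc k) = 0" unfolding add_nat_def
      using rdig0[of "Suc k"] that xk b2 by simp
    then show ?thesis using xk b2 by (simp add: Delta_k_Suc)
  qed
  have lin: "Delta_k b r (r + n) x = Delta_k b r r x - int n * (int b - 1)" for n
  proof (induction n)
    case 0 then show ?case by simp
  next
    case (Suc n)
    have e1: "Delta_k b r (r + Suc n) x = Delta_k b r (r + n) x - (int b - 1)"
      using step[of "r + n"] by (simp add: add_Suc_right)
    have e2: "int (Suc n) * (int b - 1) = int n * (int b - 1) + (int b - 1)"
      by (simp add: algebra_simps)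
    show ?case using e1 e2 Suc.IH by linarith
  qed
  have "\<not> (\<exists>d. \<forall>\<^sub>F k in sequentially. Delta_k b r k x = d)"
  proof
    assume "\<exists>d. \<forall>\<^sub>F k in sequentially. Delta_k b r k x = d"
    then obtain d N where N: "\<And>k. k \<ge> N \<Longrightarrow> Delta_k b r k x = d" by (auto simp: eventually_sequentially)
    have "Delta_k b r (r + N) x = Delta_k b r (r + Suc N) x" using N[of "r + N"] N[of "r + Suc N"] by linarith
    then have "int N * (int b - 1) = int (Suc N) * (int b - 1)" using lin[of N] lin[of "Suc N"] by linarith
    then have "int b - 1 = 0" by (simp add: algebra_simps)
    then show False using b2 by simp
  qed
  then show ?thesis unfolding Delta_def by (rule if_not_P)
qed

lemma Delta_k_bound: assumes x: "\<And>i. x i < b" shows "\<bar>Delta_k b r k x\<bar> \<le> int ((k + 1) * b)"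
proof -
  have "partial_digit_sum k (add_nat b x r) \<le> (k + 1) * b"
    unfolding partial_digit_sum_def
    using sum_bounded_above[of "{..k}" "add_nat b x r" b] by (simp add: add_nat_def b0 less_imp_le)
  moreover have "partial_digit_sum k x \<le> (k + 1) * b"
    unfolding partial_digit_sum_def
    using sum_bounded_above[of "{..k}" x b] x by (simp add: less_imp_le)
  ultimately show ?thesis unfolding Delta_k_def by linarith
qed

end



context dsetup begin

abbreviation "M \<equiv> haar b"

lemma haar_eq: "haar b = (\<Pi>\<^sub>M i\<in>UNIV. uniform_count_measure {0..<b})"
  by (simp add: haar_def)

lemma prob_M: "prob_space M"
  unfolding haar_eq using b0 by (intro prob_space_PiM prob_space_uniform_count_measure) auto

lemma cyl:
  assumes J: "finite J" and v: "\<And>i. i \<in> J \<Longrightarrow> v i < b"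
  shows "{x \<in> space M. \<forall>i\<in>J. x i = v i} \<in> sets M"
    and "emeasure M {x \<in> space M. \<forall>i\<in>J. x i = v i} = ennreal ((1 / real b) ^ card J)"
proof -
  let ?U = "\<lambda>i::nat. uniform_count_measure {0..<b}"
  have eq: "{x \<in> space M. \<forall>i\<in>J. x i = v i} = prod_emb UNIV ?U J (\<Pi>\<^sub>E j\<in>J. {v j})"
    by (auto simp: prod_emb_def haar_eq[symmetric] restrict_PiE_iff space_haar space_PiM space_uniform_count_measure PiE_iff)
  show "{x \<in> space M. \<forall>i\<in>J. x i = v i} \<in> sets M"
    unfolding eq using J v
    by (subst haar_eq, intro sets_PiM_I) (auto simp: sets_uniform_count_measure)
  have "emeasure M {x \<in> space M. \<forall>i\<in>J. x i = v i} = (\<Prod>i\<in>J. emeasure (?U i) {v i})"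
    unfolding eq using J v b0
    by (subst haar_eq, intro emeasure_PiM_emb prob_space_uniform_count_measure) (auto simp: sets_uniform_count_measure)
  also have "\<dots> = (\<Prod>i\<in>J. ennreal (1 / real b))"
    using v b0 by (intro prod.cong refl) (simp add: emeasure_uniform_count_measure)
  also have "\<dots> = ennreal ((1 / real b) ^ card J)"
    by (simp add: prod_ennreal ennreal_power)
  finally show "emeasure M {x \<in> space M. \<forall>i\<in>J. x i = v i} = ennreal ((1 / real b) ^ card J)" .
qed

lemma phi_pre: "phi b K -` {m} \<inter> space M =
   (if m < b ^ K then {x \<in> space M. \<forall>i\<in>{..<K}. x i = nat_digits b m i} else {})"
proof (cases "m < b ^ K")
  case True
  have "x \<in> phi b K -` {m} \<longleftrightarrow> (\<forall>i\<in>{..<K}. x i = nat_digits b m i)" if x: "x \<in> space M" for x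
  proof
    assume "x \<in> phi b K -` {m}"
    then show "\<forall>i\<in>{..<K}. x i = nat_digits b m i"
      using dig_phi[OF b0, of K x] x by (auto simp: space_haar)
  next
    assume a: "\<forall>i\<in>{..<K}. x i = nat_digits b m i"
    have "phi b K x = phi b K (nat_digits b m)" unfolding phi_def using a by simp
    then show "x \<in> phi b K -` {m}" using True by (simp add: phi_dig)
  qed
  then show ?thesis using True by auto
next
  case False
  then show ?thesis using phi_lt[of K _ b] by (auto simp: space_haar)
qed

lemma phi_meas: "phi b K \<in> measurable M (count_space UNIV)"
  unfolding measurable_count_space_eq2_countable
proof safe
  fix m
  show "phi b K -` {m} \<inter> space M \<in> sets M"
    unfolding phi_pre using cyl(1)[of "{..<K}" "nat_digits b m"] dig_lt[OF b0] by auto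
qed auto

lemma phi_prob: "m < b ^ K \<Longrightarrow> measure M (phi b K -` {m} \<inter> space M) = 1 / real b ^ K"
  unfolding phi_pre using cyl(2)[of "{..<K}" "nat_digits b m"] dig_lt[OF b0]
  by (simp add: measure_def power_divide)

lemma local_eq: assumes F: "\<And>x y. (\<And>i. i < K \<Longrightarrow> x i = y i) \<Longrightarrow> F x = F y"
  and x: "x \<in> space M" shows "F x = F (nat_digits b (phi b K x))"
  using x by (intro F) (auto simp: space_haar dig_phi[OF b0])

lemma local_meas: assumes F: "\<And>x y. (\<And>i. i < K \<Longrightarrow> x i = y i) \<Longrightarrow> F x = F y"
  shows "(F :: _ \<Rightarrow> real) \<in> borel_measurable M"
proof -
  have "(\<lambda>x. F (nat_digits b (phi b K x))) \<in> borel_measurable M"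
    by (rule measurable_compose[OF phi_meas]) (simp add: measurable_count_space_eq1)
  moreover have eqs: "\<And>w. w \<in> space M \<Longrightarrow> F (nat_digits b (phi b K w)) = F w"
    using local_eq[where F=F and K=K, OF F] by simp
  ultimately show ?thesis using measurable_cong[of M "\<lambda>x. F (nat_digits b (phi b K x))" F, OF eqs] by simp
qed

lemma local_integral: assumes F: "\<And>x y. (\<And>i. i < K \<Longrightarrow> x i = y i) \<Longrightarrow> F x = F y"
  shows "integral\<^sup>L M (F :: _ \<Rightarrow> real) = (\<Sum>m<b ^ K. F (nat_digits b m)) / real b ^ K"
proof -
  interpret prob_space M by (rule prob_M)
  let ?A = "\<lambda>m. phi b K -` {m} \<inter> space M"
  have A: "?A m \<in> sets M" for m using phi_meas by (intro measurable_sets) auto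
  have "integral\<^sup>L M F = integral\<^sup>L M (\<lambda>x. \<Sum>m<b ^ K. F (nat_digits b m) * indicator (?A m) x)"
  proof (rule Bochner_Integration.integral_cong[OF refl])
    fix x assume x: "x \<in> space M"
    have "phi b K x < b ^ K" using x phi_lt[of K x b] by (auto simp: space_haar)
    then have "(\<Sum>m<b ^ K. F (nat_digits b m) * indicator (?A m) x) = F (nat_digits b (phi b K x))"
      using x by (simp add: indicator_def)
    then show "F x = (\<Sum>m<b ^ K. F (nat_digits b m) * indicator (?A m) x)" using local_eq[where F=F and K=K, OF F x] by simp
  qed
  also have "\<dots> = (\<Sum>m<b ^ K. integral\<^sup>L M (\<lambda>x. F (nat_digits b m) * indicator (?A m) x))"
    by (rule Bochner_Integration.integral_sum) (use A in \<open>auto intro!: integrable_mult_right integrable_real_indicator simp: less_top[symmetric]\<close>)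
  also have "\<dots> = (\<Sum>m<b ^ K. F (nat_digits b m) * measure M (?A m))"
    by (simp add: Int_assoc)
  also have "\<dots> = (\<Sum>m<b ^ K. F (nat_digits b m) / real b ^ K)"
    using phi_prob by (intro sum.cong refl) simp
  finally show ?thesis by (simp add: sum_divide_distrib)
qed

lemma local_prob: assumes Q: "\<And>x y. (\<And>i. i < K \<Longrightarrow> x i = y i) \<Longrightarrow> Q x = Q y"
  shows "{x \<in> space M. Q x} \<in> sets M"
    and "measure M {x \<in> space M. Q x} = real (card {m. m < b ^ K \<and> Q (nat_digits b m)}) / real b ^ K"
proof -
  have F: "(\<lambda>x. of_bool (Q x) :: real) x = (\<lambda>x. of_bool (Q x)) y" if "\<And>i. i < K \<Longrightarrow> x i = y i" for x y
    using Q[OF that] by simp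
  have "(\<lambda>x. of_bool (Q x) :: real) \<in> borel_measurable M" by (rule local_meas[OF F])
  then have "{x \<in> space M. (of_bool (Q x) :: real) = 1} \<in> sets M" by measurable
  then show S: "{x \<in> space M. Q x} \<in> sets M" by simp
  have "{x \<in> space M. Q x} \<inter> space M = {x \<in> space M. Q x}" by auto
  then have "measure M {x \<in> space M. Q x} = integral\<^sup>L M (indicator {x \<in> space M. Q x})"
    by simp
  also have "\<dots> = integral\<^sup>L M (\<lambda>x. of_bool (Q x))"
    by (intro Bochner_Integration.integral_cong refl) (simp add: indicator_def)
  also have "\<dots> = (\<Sum>m<b ^ K. of_bool (Q (nat_digits b m))) / real b ^ K"
    by (rule local_integral[OF F])
  also have "\<dots> = real (card {m. m < b ^ K \<and> Q (nat_digits b m)}) / real b ^ K"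
    by (simp add: Int_def lessThan_def)
  finally show "measure M {x \<in> space M. Q x} = real (card {m. m < b ^ K \<and> Q (nat_digits b m)}) / real b ^ K" .
qed

end



lemma dens_count_Suc: "card {n. n < Suc N \<and> P n} = card {n. n < N \<and> P n} + (if P N then 1 else 0)"
proof -
  have "{n. n < Suc N \<and> P n} = {n. n < N \<and> P n} \<union> (if P N then {N} else {})"
    by (auto simp: less_Suc_eq)
  then show ?thesis by (simp add: card_insert_if)
qed

lemma dens:
  fixes P :: "nat \<Rightarrow> bool"
  assumes B: "0 < B"
  shows "(\<lambda>N. real (card {n. n < N \<and> P (n mod B)}) / real N) \<longlonglongrightarrow> real (card {m. m < B \<and> P m}) / real B"
proof -
  define c where "c N = card {n. n < N \<and> P (n mod B)}" for N
  define c0 where "c0 = card {m. m < B \<and> P m}"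
  have cSuc: "c (Suc N) = c N + (if P (N mod B) then 1 else 0)" for N
    unfolding c_def by (rule dens_count_Suc)
  have cB: "c (N + B) = c N + c0" for N
  proof (induction N)
    case 0
    have "{n. n < B \<and> P (n mod B)} = {m. m < B \<and> P m}" by auto
    then show ?case by (simp add: c_def c0_def)
  next
    case (Suc N)
    have "c (Suc N + B) = c (N + B) + (if P ((N + B) mod B) then 1 else 0)"
      using cSuc[of "N + B"] by simp
    then show ?case using Suc cSuc[of N] by simp
  qed
  have cq: "c (t + q * B) = c t + q * c0" for t q
  proof (induction q)
    case 0 then show ?case by simp
  next
    case (Suc q)
    have e: "t + Suc q * B = (t + q * B) + B" by simp
    show ?case unfolding e cB Suc.IH by simp
  qed
  have ct: "c t \<le> t" for t
  proof -
    have "c t \<le> card {..<t}" unfolding c_def by (intro card_mono) auto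
    then show ?thesis by simp
  qed
  have c0B: "c0 \<le> B"
  proof -
    have "c0 \<le> card {..<B}" unfolding c0_def by (intro card_mono) auto
    then show ?thesis by simp
  qed
  have bound: "\<bar>real (c N) / real N - real c0 / real B\<bar> \<le> real B / real N" if N: "N > 0" for N
  proof -
    define q t where "q = N div B" and "t = N mod B"
    have Nq: "N = t + q * B" by (simp add: q_def t_def)
    have tB: "t < B" using B by (simp add: t_def)
    have cN: "c N = c t + q * c0" using Nq cq by simp
    have cN': "real (c N) = real (c t) + real q * real c0" using cN by simp
    have N': "real N = real t + real q * real B" using Nq by simp
    have pos: "real t + real q * real B > 0" using N' N by simp
    have e1: "real (c N) / real N - real c0 / real B = (real B * real (c t) - real c0 * real t) / (real N * real B)"
      unfolding cN' N' using pos B by (simp add: field_simps)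
    have "\<bar>real B * real (c t) - real c0 * real t\<bar> \<le> real B * real B"
    proof -
      have "real B * real (c t) \<le> real B * real B" using ct[of t] tB by (intro mult_left_mono) auto
      moreover have "real c0 * real t \<le> real B * real B" using c0B tB by (intro mult_mono) auto
      moreover have "0 \<le> real B * real (c t)" "0 \<le> real c0 * real t" by auto
      ultimately show ?thesis unfolding abs_le_iff by linarith
    qed
    then have "\<bar>real B * real (c t) - real c0 * real t\<bar> / (real N * real B) \<le> real B * real B / (real N * real B)"
      using N B by (intro divide_right_mono) auto
    then show ?thesis using N B by (simp add: e1 abs_divide)
  qed
  have "(\<lambda>N. real (c N) / real N - real c0 / real B) \<longlonglongrightarrow> 0"
  proof (rule Lim_null_comparison)
    show "\<forall>\<^sub>F N in sequentially. norm (real (c N) / real N - real c0 / real B) \<le> real B / real N"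
      using eventually_gt_at_top[of 0] by (rule eventually_mono) (use bound in simp)
    show "(\<lambda>N. real B / real N) \<longlonglongrightarrow> 0" by (rule lim_const_over_n)
  qed
  then show ?thesis unfolding LIM_zero_iff c_def c0_def .
qed

context dsetup begin

lemma local_density: assumes Q: "\<And>x y. (\<And>i. i < K \<Longrightarrow> x i = y i) \<Longrightarrow> Q x = Q y"
  shows "(\<lambda>N. real (card {n. n < N \<and> Q (nat_digits b n)}) / real N) \<longlonglongrightarrow> measure M {x \<in> space M. Q x}"
proof -
  have eq: "Q (nat_digits b n) = Q (nat_digits b (n mod b ^ K))" for n
    by (intro Q) (simp add: dig_mod[OF b0])
  have "(\<lambda>N. real (card {n. n < N \<and> (\<lambda>m. Q (nat_digits b m)) (n mod b ^ K)}) / real N)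
       \<longlonglongrightarrow> real (card {m. m < b ^ K \<and> Q (nat_digits b m)}) / real (b ^ K)"
    using b0 by (intro dens) simp
  then show ?thesis using local_prob(2)[where Q=Q and K=K, OF Q] by (simp add: eq[symmetric])
qed

lemma dig_space: "nat_digits b n \<in> space M"
  by (simp add: space_haar dig_lt[OF b0])

lemma carry_local': "(\<And>i. i < K \<Longrightarrow> x i = y i) \<Longrightarrow> (carry b r x K = 0) = (carry b r y K = 0)"
  using carry_local[of K x y b r] by simp

lemma QD_local: "1 \<le> K \<Longrightarrow> (\<And>i. i < K \<Longrightarrow> x i = y i) \<Longrightarrow>
   (carry b r x K = 0 \<and> Delta_k b r (K - 1) x = d) = (carry b r y K = 0 \<and> Delta_k b r (K - 1) y = d)"
  using carry_local[of K x y b r] Delta_k_local[of "K - 1" x y b r] by auto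

lemma carry_ne_digits: "(\<And>i. x i < b) \<Longrightarrow> carry b r x (r + n) \<noteq> 0 \<Longrightarrow> i \<in> {r..<r + n} \<Longrightarrow> x i = b - 1"
proof (induction n)
  case 0 then show ?case by simp
next
  case (Suc n)
  have h: "carry b r x (r + n) \<noteq> 0 \<and> x (r + n) = b - 1"
    using carry_Suc_ne[of x "r + n"] Suc.prems(1,2) by simp
  show ?case
  proof (cases "i = r + n")
    case True then show ?thesis using h by simp
  next
    case False
    then have "i \<in> {r..<r + n}" using Suc.prems(3) by auto
    then show ?thesis using Suc.IH[OF Suc.prems(1) h[THEN conjunct1]] by simp
  qed
qed

lemma tail_sets: "{x \<in> space M. carry b r x K \<noteq> 0} \<in> sets M"
proof -
  have loc: "(\<not> carry b r x K = 0) = (\<not> carry b r y K = 0)" if "\<And>i. i < K \<Longrightarrow> x i = y i" for x y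
    using carry_local[of K x y b r] that by simp
  have "{x \<in> space M. \<not> (carry b r x K = 0)} \<in> sets M"
    by (rule local_prob(1)[of K "\<lambda>x. \<not> (carry b r x K = 0)", OF loc])
  then show ?thesis by simp
qed

lemma tail_bound: "measure M {x \<in> space M. carry b r x (r + n) \<noteq> 0} \<le> (1 / real b) ^ n"
proof -
  interpret prob_space M by (rule prob_M)
  let ?S = "{x \<in> space M. \<forall>i\<in>{r..<r + n}. x i = (\<lambda>_. b - 1) i}"
  have "{x \<in> space M. carry b r x (r + n) \<noteq> 0} \<subseteq> ?S"
    using carry_ne_digits by (auto simp: space_haar)
  moreover have S: "?S \<in> sets M" "emeasure M ?S = ennreal ((1 / real b) ^ card {r..<r + n})"
    using cyl[of "{r..<r+n}" "\<lambda>_. b - 1"] b0 by auto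
  ultimately have "measure M {x \<in> space M. carry b r x (r + n) \<noteq> 0} \<le> measure M ?S"
    by (intro finite_measure_mono) auto
  also have "\<dots> = (1 / real b) ^ n" using S(2) by (simp add: measure_def)
  finally show ?thesis .
qed

definition hK :: "nat \<Rightarrow> (nat \<Rightarrow> nat) \<Rightarrow> real" where
  "hK K x = (if carry b r x K = 0 then real_of_int (Delta_k b r (K - 1) x) else 0)"

lemma hK_local: "1 \<le> K \<Longrightarrow> (\<And>i. i < K \<Longrightarrow> x i = y i) \<Longrightarrow> hK K x = hK K y"
  unfolding hK_def using carry_local[of K x y b r] Delta_k_local[of "K - 1" x y b r] by auto

lemma hK_meas: "1 \<le> K \<Longrightarrow> hK K \<in> borel_measurable M"
  by (rule local_meas[of K]) (rule hK_local)

lemma hK_lim: assumes x: "x \<in> space M"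
  shows "(\<lambda>n. hK (r + n) x) \<longlonglongrightarrow> real_of_int (Delta b r x)"
proof (cases "\<exists>K\<ge>r. carry b r x K = 0")
  case True
  then obtain K where K: "r \<le> K" "carry b r x K = 0" by blast
  have xb: "\<And>i. x i < b" using x by (simp add: space_haar)
  have "hK (r + n) x = real_of_int (Delta b r x)" if "K \<le> r + n" for n
  proof -
    have c: "carry b r x (r + n) = 0" using carry_tail[OF xb K that] .
    then show ?thesis unfolding hK_def using Delta_eq[OF xb _ c] by simp
  qed
  then show ?thesis
    by (intro tendsto_eventually) (auto simp: eventually_sequentially intro!: exI[of _ K])
next
  case False
  have xb: "\<And>i. x i < b" using x by (simp add: space_haar)
  have "Delta b r x = 0" using False by (intro Delta_C[OF xb]) auto
  moreover have "hK (r + n) x = 0" for n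
  proof -
    have "carry b r x (r + n) \<noteq> 0" using False by auto
    then show ?thesis by (simp add: hK_def)
  qed
  ultimately show ?thesis by simp
qed

lemma Delta_meas: "(\<lambda>x. real_of_int (Delta b r x)) \<in> borel_measurable M"
proof (rule borel_measurable_LIMSEQ_real[where u="\<lambda>i. hK (r + i)"])
  fix x assume "x \<in> space M" then show "(\<lambda>i. hK (r + i) x) \<longlonglongrightarrow> real_of_int (Delta b r x)" by (rule hK_lim)
next
  fix i show "hK (r + i) \<in> borel_measurable M" using r1 by (intro hK_meas) simp
qed

lemma Delta_sets: "{x \<in> space M. Delta b r x = d} \<in> sets M"
proof -
  have "{x \<in> space M. real_of_int (Delta b r x) = real_of_int d} \<in> sets M"
    using Delta_meas by measurable
  then show ?thesis by simp
qed

end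



lemma summable_poly_geom:
  fixes A q :: real
  assumes A: "1 \<le> A" and q: "0 \<le> q" "q \<le> 1/2"
  shows "summable (\<lambda>n. (A + real n) ^ j * q ^ n)"
proof -
  let ?g = "\<lambda>n. (1 + 1 / (A + real n)) ^ j"
  have "(\<lambda>n. 1 / (A + real n)) \<longlonglongrightarrow> 0"
  proof (rule Lim_null_comparison)
    show "\<forall>\<^sub>F n in sequentially. norm (1 / (A + real n)) \<le> 1 / real n"
      using eventually_gt_at_top[of 0]
      by (rule eventually_mono) (use A in \<open>auto simp: field_simps\<close>)
    show "(\<lambda>n. 1 / real n) \<longlonglongrightarrow> 0" by (rule lim_const_over_n)
  qed
  then have "?g \<longlonglongrightarrow> (1 + 0) ^ j" by (intro tendsto_intros)
  then have "eventually (\<lambda>n. ?g n < 3/2) sequentially" by (intro order_tendstoD) auto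
  then obtain N where N: "\<And>n. n \<ge> N \<Longrightarrow> ?g n < 3/2" by (auto simp: eventually_sequentially)
  show ?thesis
  proof (rule summable_ratio_test[of "3/4" N])
    fix n assume n: "N \<le> n"
    have An: "A + real n > 0" using A by simp
    have "(A + real (Suc n)) ^ j = ?g n * (A + real n) ^ j"
    proof -
      have "A + real (Suc n) = (1 + 1 / (A + real n)) * (A + real n)" using An by (simp add: field_simps)
      then show ?thesis by (simp add: power_mult_distrib)
    qed
    then have "(A + real (Suc n)) ^ j * q ^ Suc n = (?g n * q) * ((A + real n) ^ j * q ^ n)"
      by (simp add: algebra_simps)
    also have "\<dots> \<le> (3/4) * ((A + real n) ^ j * q ^ n)"
    proof (rule mult_right_mono)
      have "?g n * q \<le> 3/2 * q" using N[OF n] q by (intro mult_right_mono) auto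
      also have "\<dots> \<le> 3/4" using q by simp
      finally show "?g n * q \<le> 3/4" .
      show "0 \<le> (A + real n) ^ j * q ^ n" using An q by simp
    qed
    finally show "norm ((A + real (Suc n)) ^ j * q ^ Suc n) \<le> 3/4 * norm ((A + real n) ^ j * q ^ n)"
      using An q by simp
  qed simp
qed

context dsetup begin

lemma q_le: "1 / real b \<le> 1/2" using b2 by (simp add: field_simps)

lemma density_conv:
  "(\<lambda>N. real (card {n. n < N \<and> Delta b r (nat_digits b n) = d}) / real N)
     \<longlonglongrightarrow> measure M {x \<in> space M. Delta b r x = d}"
proof (rule LIMSEQ_I)
  interpret prob_space M by (rule prob_M)
  fix e :: real assume e: "0 < e"
  obtain n0 where n0: "(1 / real b) ^ n0 < e / 3"
    using real_arch_pow_inv[of "e/3" "1 / real b"] e b2 by auto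
  define K where "K = r + n0"
  have K1: "1 \<le> K" "r \<le> K" using r1 by (auto simp: K_def)
  define Q1 where "Q1 x = (carry b r x K = 0 \<and> Delta_k b r (K - 1) x = d)" for x
  define Q2 where "Q2 x = (carry b r x K \<noteq> 0)" for x
  have loc1: "Q1 x = Q1 y" if "\<And>i. i < K \<Longrightarrow> x i = y i" for x y
    unfolding Q1_def using QD_local[OF K1(1) that] by simp
  have loc2: "Q2 x = Q2 y" if "\<And>i. i < K \<Longrightarrow> x i = y i" for x y
    unfolding Q2_def using carry_local[of K x y b r] that by simp
  let ?p = "measure M {x \<in> space M. Delta b r x = d}"
  let ?p1 = "measure M {x \<in> space M. Q1 x}"
  let ?p2 = "measure M {x \<in> space M. Q2 x}"
  have imp1: "Delta b r x = d" if "x \<in> space M" "Q1 x" for x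
    using that Delta_eq[of x K] K1 by (auto simp: Q1_def space_haar)
  have imp2: "Q1 x \<or> Q2 x" if "x \<in> space M" "Delta b r x = d" for x
    using that Delta_eq[of x K] K1 by (auto simp: Q1_def Q2_def space_haar)
  have S1: "{x \<in> space M. Q1 x} \<in> sets M" by (rule local_prob(1)[of K Q1, OF loc1])
  have S2: "{x \<in> space M. Q2 x} \<in> sets M" by (rule local_prob(1)[of K Q2, OF loc2])
  have p2: "?p2 \<le> (1 / real b) ^ n0" using tail_bound[of n0] by (simp add: Q2_def K_def)
  have pl: "?p1 \<le> ?p" using imp1 Delta_sets by (intro finite_measure_mono) auto
  have pu: "?p \<le> ?p1 + ?p2"
  proof -
    have "?p \<le> measure M ({x \<in> space M. Q1 x} \<union> {x \<in> space M. Q2 x})"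
      using imp2 S1 S2 by (intro finite_measure_mono) auto
    also have "\<dots> \<le> ?p1 + ?p2" using S1 S2 by (intro measure_subadditive) auto
    finally show ?thesis .
  qed
  define a where "a N = real (card {n. n < N \<and> Delta b r (nat_digits b n) = d}) / real N" for N
  define a1 where "a1 N = real (card {n. n < N \<and> Q1 (nat_digits b n)}) / real N" for N
  define a2 where "a2 N = real (card {n. n < N \<and> Q2 (nat_digits b n)}) / real N" for N
  have l1: "a1 \<longlonglongrightarrow> ?p1" unfolding a1_def by (rule local_density[of K Q1, OF loc1])
  have l2: "a2 \<longlonglongrightarrow> ?p2" unfolding a2_def by (rule local_density[of K Q2, OF loc2])
  obtain N1 where N1: "\<And>N. N \<ge> N1 \<Longrightarrow> norm (a1 N - ?p1) < e / 3"
    using LIMSEQ_D[OF l1, of "e/3"] e by auto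
  obtain N2 where N2: "\<And>N. N \<ge> N2 \<Longrightarrow> norm (a2 N - ?p2) < e / 3"
    using LIMSEQ_D[OF l2, of "e/3"] e by auto
  have ab: "a1 N \<le> a N \<and> a N \<le> a1 N + a2 N" if N: "N > 0" for N
  proof -
    let ?A = "{n. n < N \<and> Delta b r (nat_digits b n) = d}"
    let ?A1 = "{n. n < N \<and> Q1 (nat_digits b n)}"
    let ?A2 = "{n. n < N \<and> Q2 (nat_digits b n)}"
    have "card ?A1 \<le> card ?A" using imp1[OF dig_space] by (intro card_mono) auto
    moreover have "card ?A \<le> card (?A1 \<union> ?A2)" using imp2[OF dig_space] by (intro card_mono) auto
    moreover have "card (?A1 \<union> ?A2) \<le> card ?A1 + card ?A2" by (rule card_Un_le)
    ultimately have "real (card ?A1) \<le> real (card ?A)" "real (card ?A) \<le> real (card ?A1) + real (card ?A2)"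
      by linarith+
    then show ?thesis unfolding a_def a1_def a2_def using N
      by (auto simp: divide_right_mono add_divide_distrib[symmetric])
  qed
  show "\<exists>no. \<forall>N\<ge>no. norm (real (card {n. n < N \<and> Delta b r (nat_digits b n) = d}) / real N - ?p) < e"
  proof (intro exI allI impI)
    fix N assume N: "max 1 (max N1 N2) \<le> N"
    have h1: "\<bar>a1 N - ?p1\<bar> < e / 3" using N1[of N] N by auto
    have h2: "\<bar>a2 N - ?p2\<bar> < e / 3" using N2[of N] N by auto
    have h3: "a1 N \<le> a N" "a N \<le> a1 N + a2 N" using ab[of N] N by auto
    have "\<bar>a N - ?p\<bar> < e" using h1 h2 h3 pl pu p2 n0 unfolding abs_less_iff by linarith
    then show "norm (real (card {n. n < N \<and> Delta b r (nat_digits b n) = d}) / real N - ?p) < e"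
      by (simp add: a_def)
  qed
qed

end



lemma shift_inj: assumes "(m::nat) < B" "m' < B" "(m + r) mod B = (m' + r) mod B" shows "m = m'"
proof -
  have "int ((m + r) mod B) = int ((m' + r) mod B)" using assms(3) by simp
  then have "(int m + int r) mod int B = (int m' + int r) mod int B" by (simp add: of_nat_mod)
  then have "int B dvd (int m + int r) - (int m' + int r)" by (simp add: mod_eq_dvd_iff)
  then have d: "int B dvd int m - int m'" by simp
  have "\<bar>int m - int m'\<bar> < int B" using assms(1,2) by linarith
  then have "int m - int m' = 0" using d by (meson dvd_abs_iff zdvd_not_zless zero_less_abs_iff)
  then show ?thesis by simp
qed

lemma shift_sum: fixes B r :: nat assumes B: "0 < B" shows "(\<Sum>m<B. f ((m + r) mod B)) = (\<Sum>m<B. f m)"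
proof -
  have inj: "inj_on (\<lambda>m. (m + r) mod B) {..<B}"
  proof (rule inj_onI)
    fix x y assume "x \<in> {..<B}" "y \<in> {..<B}" "(x + r) mod B = (y + r) mod B"
    then show "x = y" using shift_inj[of x B y r] by simp
  qed
  have "(\<lambda>m. (m + r) mod B) ` {..<B} = {..<B}"
    using B inj by (intro endo_inj_surj) auto
  then have "bij_betw (\<lambda>m. (m + r) mod B) {..<B} {..<B}" using inj by (simp add: bij_betw_def)
  then show ?thesis by (rule sum.reindex_bij_betw)
qed

context dsetup begin

lemma sum_Delta_zero: assumes K: "1 \<le> K"
  shows "(\<Sum>m<b ^ K. Delta_k b r (K - 1) (nat_digits b m)) = 0"
proof -
  have e: "partial_digit_sum (K - 1) (add_nat b (nat_digits b m) r) = partial_digit_sum (K - 1) (nat_digits b ((m + r) mod b ^ K))" for m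
    unfolding partial_digit_sum_def
  proof (intro sum.cong refl)
    fix i assume "i \<in> {..K - 1}"
    then have "i < K" using K by auto
    then show "add_nat b (nat_digits b m) r i = nat_digits b ((m + r) mod b ^ K) i"
      by (simp add: add_nat_nat[OF b0] dig_mod[OF b0])
  qed
  have "(\<Sum>m<b ^ K. Delta_k b r (K - 1) (nat_digits b m))
      = (\<Sum>m<b ^ K. int (partial_digit_sum (K - 1) (nat_digits b ((m + r) mod b ^ K))))
        - (\<Sum>m<b ^ K. int (partial_digit_sum (K - 1) (nat_digits b m)))"
    unfolding Delta_k_def e by (simp add: sum_subtractf)
  also have "\<dots> = 0"
    using shift_sum[of "b ^ K" "\<lambda>m. int (partial_digit_sum (K - 1) (nat_digits b m))" r] b0 by simp
  finally show ?thesis .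
qed

lemma moment_finite: "(\<integral>\<^sup>+x. ennreal (\<bar>real_of_int (Delta b r x)\<bar> ^ j) \<partial>M) < \<infinity>"
proof -
  interpret prob_space M by (rule prob_M)
  define D where "D n = {x \<in> space M. carry b r x (r + n) \<noteq> 0}" for n
  define a where "a n = (real (r + n + 1) * real b) ^ j" for n
  define c where "c = (real r * real b) ^ j"
  have Ds: "D n \<in> sets M" for n unfolding D_def by (rule tail_sets)
  have pw: "ennreal (\<bar>real_of_int (Delta b r x)\<bar> ^ j) \<le> ennreal c + (\<Sum>n. ennreal (a n) * indicator (D n) x)"
    if x: "x \<in> space M" for x
  proof -
    have xb: "\<And>i. x i < b" using x by (simp add: space_haar)
    have bd: "\<bar>real_of_int (Delta b r x)\<bar> \<le> real r * real b \<or>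
        (\<exists>n. x \<in> D n \<and> \<bar>real_of_int (Delta b r x)\<bar> \<le> real (r + n + 1) * real b)"
    proof (cases "\<exists>K. r \<le> K \<and> carry b r x K = 0")
      case True
      define K where "K = (LEAST K. r \<le> K \<and> carry b r x K = 0)"
      have K: "r \<le> K" "carry b r x K = 0" using LeastI_ex[OF True] by (auto simp: K_def)
      have DK: "Delta b r x = Delta_k b r (K - 1) x" using Delta_eq[OF xb K] .
      have "\<bar>Delta_k b r (K - 1) x\<bar> \<le> int ((K - 1 + 1) * b)" by (rule Delta_k_bound[OF xb])
      then have bK: "\<bar>real_of_int (Delta b r x)\<bar> \<le> real K * real b"
        using K r1 DK by (simp del: of_int_abs add: of_int_abs[symmetric]) (metis of_int_le_iff of_int_of_nat_eq of_nat_mult)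
      show ?thesis
      proof (cases "K = r")
        case True then show ?thesis using bK by simp
      next
        case False
        define n where "n = K - r - 1"
        have Kn: "K = r + n + 1" using False K by (simp add: n_def)
        have "\<not> (r \<le> r + n \<and> carry b r x (r + n) = 0)"
          unfolding K_def[symmetric] by (rule not_less_Least) (simp add: Kn K_def[symmetric])
        then have "x \<in> D n" using x by (simp add: D_def)
        then show ?thesis using bK Kn by auto
      qed
    next
      case False
      then have "Delta b r x = 0" by (intro Delta_C[OF xb]) auto
      then show ?thesis by simp
    qed
    show ?thesis
    proof (cases "\<bar>real_of_int (Delta b r x)\<bar> \<le> real r * real b")
      case True
      then have "\<bar>real_of_int (Delta b r x)\<bar> ^ j \<le> c" unfolding c_def by (intro power_mono) auto
      then have "ennreal (\<bar>real_of_int (Delta b r x)\<bar> ^ j) \<le> ennreal c" by (rule ennreal_leI)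
      also have "\<dots> \<le> ennreal c + (\<Sum>n. ennreal (a n) * indicator (D n) x)" by simp
      finally show ?thesis .
    next
      case False
      then obtain n where n: "x \<in> D n" "\<bar>real_of_int (Delta b r x)\<bar> \<le> real (r + n + 1) * real b" using bd by blast
      then have "\<bar>real_of_int (Delta b r x)\<bar> ^ j \<le> a n" unfolding a_def by (intro power_mono) auto
      then have "ennreal (\<bar>real_of_int (Delta b r x)\<bar> ^ j) \<le> ennreal (a n) * indicator (D n) x"
        using n by (simp add: ennreal_leI)
      also have "\<dots> \<le> (\<Sum>i. ennreal (a i) * indicator (D i) x)"
      proof -
        define f where "f i = ennreal (a i) * indicator (D i) x" for i
        have "(\<Sum>i\<in>{n}. f i) \<le> suminf f" by (rule sum_le_suminf) auto
        then show ?thesis by (simp add: f_def[symmetric])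
      qed
      also have "\<dots> \<le> ennreal c + (\<Sum>n. ennreal (a n) * indicator (D n) x)" by simp
      finally show ?thesis .
    qed
  qed
  have I0: "(\<integral>\<^sup>+x. ennreal (\<bar>real_of_int (Delta b r x)\<bar> ^ j) \<partial>M)
      \<le> (\<integral>\<^sup>+x. ennreal c + (\<Sum>n. ennreal (a n) * indicator (D n) x) \<partial>M)"
    using pw by (intro nn_integral_mono) auto
  have I1: "(\<integral>\<^sup>+x. ennreal c + (\<Sum>n. ennreal (a n) * indicator (D n) x) \<partial>M)
     = (\<integral>\<^sup>+x. ennreal c \<partial>M) + (\<integral>\<^sup>+x. (\<Sum>n. ennreal (a n) * indicator (D n) x) \<partial>M)"
    using Ds by (intro nn_integral_add) auto
  have I2: "(\<integral>\<^sup>+x. (\<Sum>n. ennreal (a n) * indicator (D n) x) \<partial>M) = (\<Sum>n. ennreal (a n) * emeasure M (D n))"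
    using Ds by (simp add: nn_integral_suminf nn_integral_cmult_indicator)
  have I3: "(\<Sum>n. ennreal (a n) * emeasure M (D n)) \<le> (\<Sum>n. ennreal (a n * (1 / real b) ^ n))"
  proof (intro suminf_le allI summableI)
    fix n
    have "emeasure M (D n) = ennreal (measure M (D n))" by (simp add: emeasure_eq_measure)
    also have "\<dots> \<le> ennreal ((1 / real b) ^ n)" unfolding D_def by (intro ennreal_leI tail_bound)
    finally have "ennreal (a n) * emeasure M (D n) \<le> ennreal (a n) * ennreal ((1 / real b) ^ n)"
      by (rule mult_left_mono) simp
    then show "ennreal (a n) * emeasure M (D n) \<le> ennreal (a n * (1 / real b) ^ n)"
      by (simp add: ennreal_mult a_def)
  qed
  have I4: "(\<Sum>n. ennreal (a n * (1 / real b) ^ n)) = ennreal (\<Sum>n. a n * (1 / real b) ^ n)"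
  proof (rule suminf_ennreal2)
    show "\<And>n. 0 \<le> a n * (1 / real b) ^ n" by (simp add: a_def)
    have fe: "(\<lambda>n. a n * (1 / real b) ^ n) = (\<lambda>n. real b ^ j * ((real (r + 1) + real n) ^ j * (1 / real b) ^ n))"
    proof (rule ext)
      fix n
      have e: "real (r + n + 1) * real b = real b * (real (r + 1) + real n)" by simp
      show "a n * (1 / real b) ^ n = real b ^ j * ((real (r + 1) + real n) ^ j * (1 / real b) ^ n)"
        by (simp only: a_def e power_mult_distrib mult.assoc)
    qed
    show "summable (\<lambda>n. a n * (1 / real b) ^ n)" unfolding fe
      by (intro summable_mult summable_poly_geom q_le) auto
  qed
  have I5: "(\<integral>\<^sup>+x. ennreal c \<partial>M) = ennreal c" by (simp add: emeasure_space_1)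
  have "(\<integral>\<^sup>+x. ennreal (\<bar>real_of_int (Delta b r x)\<bar> ^ j) \<partial>M)
      \<le> ennreal c + ennreal (\<Sum>n. a n * (1 / real b) ^ n)"
    using I0 I3 unfolding I1 I2 I4 I5 by (meson add_left_mono order_trans)
  also have "\<dots> < \<infinity>" by (simp add: ennreal_plus[symmetric] del: ennreal_plus)
  finally show ?thesis .
qed

lemma Delta_integrable: "integrable M (\<lambda>x. real_of_int (Delta b r x))"
  using moment_finite[of 1] Delta_meas by (intro integrableI_bounded) auto

end



context dsetup begin

lemma int_hK_bound: assumes K: "r \<le> K"
  shows "\<bar>integral\<^sup>L M (hK K)\<bar> \<le> real K * real b * (1 / real b) ^ (K - r)"
proof -
  have K1: "1 \<le> K" using K r1 by simp
  let ?B = "b ^ K"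
  define g where "g m = real_of_int (Delta_k b r (K - 1) (nat_digits b m))" for m
  define P where "P m = (carry b r (nat_digits b m) K \<noteq> 0)" for m
  have I: "integral\<^sup>L M (hK K) = (\<Sum>m<?B. hK K (nat_digits b m)) / real b ^ K"
    by (rule local_integral[of K]) (rule hK_local[OF K1])
  have hk: "hK K (nat_digits b m) = g m - (if P m then g m else 0)" for m
    by (simp add: hK_def g_def P_def)
  have s0: "(\<Sum>m<?B. g m) = 0"
    using sum_Delta_zero[OF K1] unfolding g_def by (metis of_int_0 of_int_sum)
  have gb: "\<bar>g m\<bar> \<le> real K * real b" for m
  proof -
    have "\<bar>Delta_k b r (K - 1) (nat_digits b m)\<bar> \<le> int ((K - 1 + 1) * b)"
      by (rule Delta_k_bound) (simp add: dig_lt[OF b0])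
    then have "\<bar>Delta_k b r (K - 1) (nat_digits b m)\<bar> \<le> int (K * b)" using K1 by simp
    then show ?thesis unfolding g_def
      by (metis of_int_abs of_int_le_iff of_int_of_nat_eq of_nat_mult)
  qed
  have "(\<Sum>m<?B. hK K (nat_digits b m)) = - (\<Sum>m<?B. if P m then g m else 0)"
    unfolding hk sum_subtractf s0 by simp
  then have "\<bar>\<Sum>m<?B. hK K (nat_digits b m)\<bar> = \<bar>\<Sum>m<?B. if P m then g m else 0\<bar>" by simp
  also have "\<dots> \<le> (\<Sum>m<?B. \<bar>if P m then g m else 0\<bar>)" by (rule sum_abs)
  also have "\<dots> \<le> (\<Sum>m<?B. real K * real b * of_bool (P m))"
    by (intro sum_mono) (use gb in auto)
  also have "\<dots> = real K * real b * real (card {m. m < ?B \<and> P m})"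
  proof -
    have "{..<?B} \<inter> {m. P m} = {m. m < ?B \<and> P m}" by auto
    then show ?thesis by (simp add: sum_distrib_left[symmetric])
  qed
  finally have A: "\<bar>\<Sum>m<?B. hK K (nat_digits b m)\<bar> \<le> real K * real b * real (card {m. m < ?B \<and> P m})" .
  have loc: "(carry b r x K \<noteq> 0) = (carry b r y K \<noteq> 0)" if "\<And>i. i < K \<Longrightarrow> x i = y i" for x y
    using carry_local[of K x y b r] that by simp
  have "real (card {m. m < ?B \<and> P m}) / real b ^ K = measure M {x \<in> space M. carry b r x K \<noteq> 0}"
    using local_prob(2)[of K "\<lambda>x. carry b r x K \<noteq> 0", OF loc] by (simp add: P_def)
  also have "\<dots> \<le> (1 / real b) ^ (K - r)"
    using tail_bound[of "K - r"] K by simp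
  finally have C: "real (card {m. m < ?B \<and> P m}) / real b ^ K \<le> (1 / real b) ^ (K - r)" .
  have "\<bar>integral\<^sup>L M (hK K)\<bar> = \<bar>\<Sum>m<?B. hK K (nat_digits b m)\<bar> / real b ^ K"
    unfolding I by (simp add: abs_divide)
  also have "\<dots> \<le> real K * real b * real (card {m. m < ?B \<and> P m}) / real b ^ K"
    using A by (intro divide_right_mono) auto
  also have "\<dots> = real K * real b * (real (card {m. m < ?B \<and> P m}) / real b ^ K)" by simp
  also have "\<dots> \<le> real K * real b * (1 / real b) ^ (K - r)"
    using C by (intro mult_left_mono) auto
  finally show ?thesis .
qed

lemma integral_zero: "integral\<^sup>L M (\<lambda>x. real_of_int (Delta b r x)) = 0"
proof -
  interpret prob_space M by (rule prob_M)
  let ?s = "\<lambda>n. hK (r + Suc n)"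
  have conv: "(\<lambda>n. integral\<^sup>L M (?s n)) \<longlonglongrightarrow> integral\<^sup>L M (\<lambda>x. real_of_int (Delta b r x))"
  proof (rule integral_dominated_convergence[where w="\<lambda>x. \<bar>real_of_int (Delta b r x)\<bar>"])
    show "(\<lambda>x. real_of_int (Delta b r x)) \<in> borel_measurable M" by (rule Delta_meas)
    show "?s n \<in> borel_measurable M" for n by (rule hK_meas) simp
    show "integrable M (\<lambda>x. \<bar>real_of_int (Delta b r x)\<bar>)" using Delta_integrable by auto
    show "AE x in M. (\<lambda>n. ?s n x) \<longlonglongrightarrow> real_of_int (Delta b r x)"
    proof (rule AE_I2)
      fix x assume "x \<in> space M"
      from LIMSEQ_Suc[OF hK_lim[OF this]] show "(\<lambda>n. ?s n x) \<longlonglongrightarrow> real_of_int (Delta b r x)" by simp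
    qed
    show "AE x in M. norm (?s n x) \<le> \<bar>real_of_int (Delta b r x)\<bar>" for n
    proof (rule AE_I2)
      fix x assume x: "x \<in> space M"
      have xb: "\<And>i. x i < b" using x by (simp add: space_haar)
      show "norm (?s n x) \<le> \<bar>real_of_int (Delta b r x)\<bar>"
      proof (cases "carry b r x (r + Suc n) = 0")
        case True
        have "Delta b r x = Delta_k b r (r + Suc n - 1) x" by (rule Delta_eq[OF xb _ True]) simp
        then show ?thesis using True by (simp add: hK_def)
      next
        case False then show ?thesis by (simp add: hK_def)
      qed
    qed
  qed
  have zero: "(\<lambda>n. integral\<^sup>L M (?s n)) \<longlonglongrightarrow> 0"
  proof (rule Lim_null_comparison)
    have "summable (\<lambda>n. (real (r + 1) + real n) ^ 1 * (1 / real b) ^ n)"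
      by (intro summable_poly_geom q_le) auto
    from summable_LIMSEQ_zero[OF this]
    show "(\<lambda>n. (real (r + 1) + real n) ^ 1 * (1 / real b) ^ n) \<longlonglongrightarrow> 0" .
    show "\<forall>\<^sub>F n in sequentially. norm (integral\<^sup>L M (?s n)) \<le> (real (r + 1) + real n) ^ 1 * (1 / real b) ^ n"
    proof (intro always_eventually allI)
      fix n
      have "norm (integral\<^sup>L M (?s n)) \<le> real (r + Suc n) * real b * (1 / real b) ^ (r + Suc n - r)"
        using int_hK_bound[of "r + Suc n"] by simp
      also have "\<dots> = (real (r + 1) + real n) * (real b * (1 / real b)) * (1 / real b) ^ n"
        by (simp add: algebra_simps)
      also have "\<dots> = (real (r + 1) + real n) ^ 1 * (1 / real b) ^ n" using b0 by simp
      finally show "norm (integral\<^sup>L M (?s n)) \<le> (real (r + 1) + real n) ^ 1 * (1 / real b) ^ n" .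
    qed
  qed
  show ?thesis using LIMSEQ_unique[OF conv zero] .
qed

definition pd :: "int \<Rightarrow> real" where "pd d = measure M {x \<in> space M. Delta b r x = d}"

lemma mu_eq: "mu b r d = pd d"
  unfolding mu_def pd_def by (rule limI[OF density_conv])

definition sF :: "(int \<Rightarrow> real) \<Rightarrow> int set \<Rightarrow> (nat \<Rightarrow> nat) \<Rightarrow> real" where
  "sF w F x = (\<Sum>d\<in>F. w d * indicator {x \<in> space M. Delta b r x = d} x)"

lemma sF_meas: "sF w F \<in> borel_measurable M"
  unfolding sF_def using Delta_sets by (intro borel_measurable_sum borel_measurable_times borel_measurable_const borel_measurable_indicator) auto

lemma sF_integral: "finite F \<Longrightarrow> integral\<^sup>L M (sF w F) = (\<Sum>d\<in>F. w d * pd d)"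
proof -
  interpret prob_space M by (rule prob_M)
  assume F: "finite F"
  have "integral\<^sup>L M (sF w F) = (\<Sum>d\<in>F. integral\<^sup>L M (\<lambda>x. w d * indicator {x \<in> space M. Delta b r x = d} x))"
    unfolding sF_def
    by (rule Bochner_Integration.integral_sum) (use Delta_sets in \<open>auto intro!: integrable_mult_right integrable_real_indicator simp: less_top[symmetric]\<close>)
  also have "\<dots> = (\<Sum>d\<in>F. w d * measure M ({x \<in> space M. Delta b r x = d} \<inter> space M))"
    by (simp only: integral_mult_right_zero Bochner_Integration.integral_indicator)
  also have "\<dots> = (\<Sum>d\<in>F. w d * pd d)"
  proof -
    have se: "\<And>d. {x \<in> space M. Delta b r x = d} \<inter> space M = {x \<in> space M. Delta b r x = d}" by auto
    show ?thesis by (simp only: se pd_def)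
  qed
  finally show ?thesis .
qed

lemma sF_point: assumes F: "finite F" shows "sF w F x = (if Delta b r x \<in> F \<and> x \<in> space M then w (Delta b r x) else 0)"
proof (cases "x \<in> space M")
  case True
  have "sF w F x = (\<Sum>d\<in>F. if Delta b r x = d then w d else 0)"
    unfolding sF_def by (intro sum.cong refl) (simp add: indicator_def True)
  also have "\<dots> = (if Delta b r x \<in> F then w (Delta b r x) else 0)"
    by (rule sum.delta'[OF F])
  finally show ?thesis using True by simp
next
  case False
  then show ?thesis by (simp add: sF_def indicator_def)
qed

lemma has_sum_part: "((\<lambda>d::int. real_of_int d * mu b r d) has_sum
            (\<integral>x. real_of_int (Delta b r x) \<partial>M)) UNIV"
proof -
  interpret prob_space M by (rule prob_M)
  define f where "f d = real_of_int d * pd d" for d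
  have pd0: "0 \<le> pd d" for d by (simp add: pd_def)
  have absf: "\<bar>f d\<bar> = \<bar>real_of_int d\<bar> * pd d" for d by (simp add: f_def abs_mult pd0)
  have bnd: "sum (\<lambda>d. \<bar>f d\<bar>) F \<le> integral\<^sup>L M (\<lambda>x. \<bar>real_of_int (Delta b r x)\<bar>)" if F: "finite F" for F
  proof -
    have "sum (\<lambda>d. \<bar>f d\<bar>) F = integral\<^sup>L M (sF (\<lambda>d. \<bar>real_of_int d\<bar>) F)"
      using sF_integral[OF F] by (simp add: absf)
    also have "\<dots> \<le> integral\<^sup>L M (\<lambda>x. \<bar>real_of_int (Delta b r x)\<bar>)"
    proof (rule integral_mono)
      show "integrable M (sF (\<lambda>d. \<bar>real_of_int d\<bar>) F)"
        unfolding sF_def using Delta_sets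
        by (intro Bochner_Integration.integrable_sum integrable_mult_right integrable_real_indicator) (auto simp: less_top[symmetric])
      show "integrable M (\<lambda>x. \<bar>real_of_int (Delta b r x)\<bar>)" using Delta_integrable by auto
      show "sF (\<lambda>d. \<bar>real_of_int d\<bar>) F x \<le> \<bar>real_of_int (Delta b r x)\<bar>" for x
        by (simp add: sF_point[OF F])
    qed
    finally show ?thesis .
  qed
  have summ: "f summable_on UNIV"
  proof (rule abs_summable_summable)
    show "(\<lambda>d. norm (f d)) summable_on UNIV"
      unfolding real_norm_def by (rule nonneg_bdd_above_summable_on) (auto intro!: bdd_aboveI[where M="integral\<^sup>L M (\<lambda>x. \<bar>real_of_int (Delta b r x)\<bar>)"] bnd)
  qed
  define D where "D n = {- int n..int n}" for n
  have flD: "filterlim D (finite_subsets_at_top UNIV) sequentially"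
    unfolding filterlim_finite_subsets_at_top
  proof (intro allI impI)
    fix X :: "int set" assume "finite X \<and> X \<subseteq> UNIV"
    then have X: "finite X" by simp
    define N where "N = nat (\<Sum>x\<in>X. \<bar>x\<bar>)"
    have "\<bar>x\<bar> \<le> int N" if "x \<in> X" for x
      using member_le_sum[of x X abs] that X by (simp add: N_def)
    then have "X \<subseteq> D n" if "n \<ge> N" for n using that by (force simp: D_def abs_le_iff)
    then show "\<forall>\<^sub>F n in sequentially. finite (D n) \<and> X \<subseteq> D n \<and> D n \<subseteq> UNIV"
      by (auto simp: D_def eventually_sequentially)
  qed
  have l1: "(\<lambda>n. sum f (D n)) \<longlonglongrightarrow> infsum f UNIV"
    using has_sum_infsum[OF summ] unfolding has_sum_def
    by (rule filterlim_compose) (rule flD)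
  have l2: "(\<lambda>n. sum f (D n)) \<longlonglongrightarrow> integral\<^sup>L M (\<lambda>x. real_of_int (Delta b r x))"
  proof -
    have eq: "sum f (D n) = integral\<^sup>L M (sF real_of_int (D n))" for n
      by (simp add: sF_integral D_def f_def)
    have "(\<lambda>n. integral\<^sup>L M (sF real_of_int (D n))) \<longlonglongrightarrow> integral\<^sup>L M (\<lambda>x. real_of_int (Delta b r x))"
    proof (rule integral_dominated_convergence[where w="\<lambda>x. \<bar>real_of_int (Delta b r x)\<bar>"])
      show "(\<lambda>x. real_of_int (Delta b r x)) \<in> borel_measurable M" by (rule Delta_meas)
      show "sF real_of_int (D n) \<in> borel_measurable M" for n by (rule sF_meas)
      show "integrable M (\<lambda>x. \<bar>real_of_int (Delta b r x)\<bar>)" using Delta_integrable by auto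
      show "AE x in M. (\<lambda>n. sF real_of_int (D n) x) \<longlonglongrightarrow> real_of_int (Delta b r x)"
      proof (rule AE_I2)
        fix x assume x: "x \<in> space M"
        have "sF real_of_int (D n) x = real_of_int (Delta b r x)" if "n \<ge> nat \<bar>Delta b r x\<bar>" for n
          using that x by (simp add: sF_point D_def abs_le_iff) linarith
        then show "(\<lambda>n. sF real_of_int (D n) x) \<longlonglongrightarrow> real_of_int (Delta b r x)"
          by (intro tendsto_eventually) (auto simp: eventually_sequentially)
      qed
      show "AE x in M. norm (sF real_of_int (D n) x) \<le> \<bar>real_of_int (Delta b r x)\<bar>" for n
        by (rule AE_I2) (simp add: sF_point D_def)
    qed
    then show ?thesis by (simp add: eq)
  qed
  have "infsum f UNIV = integral\<^sup>L M (\<lambda>x. real_of_int (Delta b r x))" using LIMSEQ_unique[OF l1 l2] .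
  then have "(f has_sum integral\<^sup>L M (\<lambda>x. real_of_int (Delta b r x))) UNIV"
    using has_sum_infsum[OF summ] by simp
  then show ?thesis unfolding mu_eq f_def[abs_def] .
qed

end

theorem mainTheorem6:
  fixes b r :: nat
  assumes "b \<ge> 2" and "r \<ge> 1"
  shows "(\<forall>d::int.
           (\<lambda>N. real (card {n. n < N \<and> Delta b r (nat_digits b n) = d}) / real N)
             \<longlonglongrightarrow> measure (haar b) {x \<in> space (haar b). Delta b r x = d})
       \<and> (\<forall>d::int. mu b r d = measure (haar b) {x \<in> space (haar b). Delta b r x = d})
       \<and> integrable (haar b) (\<lambda>x. real_of_int (Delta b r x))
       \<and> ((\<lambda>d::int. real_of_int d * mu b r d) has_sum
            (\<integral>x. real_of_int (Delta b r x) \<partial>haar b)) UNIV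
       \<and> (\<integral>x. real_of_int (Delta b r x) \<partial>haar b) = 0
       \<and> (\<forall>j::nat. j \<ge> 1 \<longrightarrow>
            (\<integral>\<^sup>+x. ennreal (\<bar>real_of_int (Delta b r x)\<bar> ^ j) \<partial>haar b) < \<infinity>)"
proof -
  interpret dsetup b r using assms by unfold_locales
  show ?thesis
  proof (intro conjI allI impI)
    fix d show "(\<lambda>N. real (card {n. n < N \<and> Delta b r (nat_digits b n) = d}) / real N)
             \<longlonglongrightarrow> measure (haar b) {x \<in> space (haar b). Delta b r x = d}" by (rule density_conv)
  next
    fix d show "mu b r d = measure (haar b) {x \<in> space (haar b). Delta b r x = d}"
      unfolding mu_eq pd_def ..
  next
    show "integrable (haar b) (\<lambda>x. real_of_int (Delta b r x))" by (rule Delta_integrable)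
  next
    show "((\<lambda>d::int. real_of_int d * mu b r d) has_sum
            (\<integral>x. real_of_int (Delta b r x) \<partial>haar b)) UNIV" by (rule has_sum_part)
  next
    show "(\<integral>x. real_of_int (Delta b r x) \<partial>haar b) = 0" by (rule integral_zero)
  next
    fix j :: nat show "(\<integral>\<^sup>+x. ennreal (\<bar>real_of_int (Delta b r x)\<bar> ^ j) \<partial>haar b) < \<infinity>"
      by (rule moment_finite)
  qed
qed



end
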